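(* Let $f\in C^1[0,1]$ with $f(0)=0$, $h:=f'$, $q$ satisfying (q), and assume that $q$ is (left-)differentiable at $1$ with $\dot q(1)\in(-\infty,0]$. Let $c\ge c^*$ and let $z$ be a solution of $(P_c)$. Then the left derivative $\dot z(1)=\lim_{\varphi\to1^-}\frac{z(\varphi)-z(1)}{\varphi-1}$ exists, and: (i) if $z(1)<0$, then $\dot z(1)=h(1)-c$; (ii) if $z(1)=0$, then $\dot z(1)=\frac12\big[h(1)-c+\sqrt{(h(1)-c)^2-4\dot q(1)}\big]$ when $\dot q(1)<0$, and $\dot z(1)=\max\{0,h(1)-c\}$ when $\dot q(1)=0$.
   Context: Condition (q): $q\in C[0,1]$, $q>0$ on $(0,1)$, $q(0)=q(1)=0$, and $\limsup_{\varphi\to0^+}q(\varphi)/\varphi<+\infty$. For $c\in\mathbb R$, a solution of problem $(P_c)$ is a function $z\in C[0,1]\cap C^1(0,1)$ with $\dot z(\varphi)=h(\varphi)-c-q(\varphi)/z(\varphi)$ and $z(\varphi)<0$ for all $\varphi\in(0,1)$, and $z(0)=0$. $c^*$ denotes the real number such that $(P_c)$ has a solution with $z(1)=0$ iff $c\ge c^*$. *)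

theory Defs
  imports "HOL-Analysis.Analysis" "HOL-Library.Liminf_Limsup"
begin

definition cond_q :: "(real \<Rightarrow> real) \<Rightarrow> bool" where
  "cond_q q \<longleftrightarrow> continuous_on {0..1} q \<and> (\<forall>x\<in>{0<..<1}. q x > 0) \<and> q 0 = 0 \<and> q 1 = 0
     \<and> Limsup (at_right 0) (\<lambda>x. ereal (q x / x)) < \<infinity>"

definition sol_P :: "(real \<Rightarrow> real) \<Rightarrow> (real \<Rightarrow> real) \<Rightarrow> real \<Rightarrow> (real \<Rightarrow> real) \<Rightarrow> bool" where
  "sol_P h q c z \<longleftrightarrow> continuous_on {0..1} z
     \<and> (\<forall>x\<in>{0<..<1}. (z has_real_derivative (h x - c - q x / z x)) (at x))
     \<and> continuous_on {0<..<1} (deriv z)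
     \<and> (\<forall>x\<in>{0<..<1}. z x < 0) \<and> z 0 = 0"

end

theory Submission
  imports Defs
begin

lemma trap:
  fixes z z' :: "real \<Rightarrow> real"
  assumes x0: "x0 < 1" and cz: "continuous_on {x0..1} z" and z1: "z 1 = 0"
    and dz: "\<And>x. x0 < x \<Longrightarrow> x < 1 \<Longrightarrow> (z has_real_derivative z' x) (at x)"
    and cond: "\<And>x. x0 < x \<Longrightarrow> x < 1 \<Longrightarrow> z x < lam*(x-1) \<Longrightarrow> z' x < lam"
  shows "lam*(x0-1) \<le> z x0"
proof (rule ccontr)
  assume "\<not> ?thesis" hence neg: "z x0 < lam*(x0-1)" by simp
  define g where "g x = z x - lam*(x-1)" for x
  have cg: "continuous_on {x0..1} g" unfolding g_def by (intro continuous_intros cz)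
  define S where "S = {x0..1} \<inter> g -` {0..}"
  have cl: "closed S" unfolding S_def by (rule continuous_closed_preimage[OF cg]) auto
  have "1 \<in> S" using x0 z1 by (auto simp: S_def g_def)
  moreover have bb: "bdd_below S" unfolding S_def by (rule bdd_belowI[of _ x0]) auto
  ultimately have x1S: "Inf S \<in> S" using closed_contains_Inf cl by blast
  define x1 where "x1 = Inf S"
  have "x0 \<notin> S" using neg by (auto simp: S_def g_def)
  with x1S have x01: "x0 < x1" "x1 \<le> 1" unfolding x1_def S_def by (auto simp: le_less)
  have below: "g x < 0" if "x0 \<le> x" "x < x1" for x
  proof (rule ccontr)
    assume "\<not> g x < 0"
    hence "x \<in> S" using that x01 by (auto simp: S_def)
    hence "x1 \<le> x" unfolding x1_def using bb by (rule cInf_lower)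
    thus False using that by simp
  qed
  have "\<exists>l w. x0 < w \<and> w < x1 \<and> DERIV g w :> l \<and> g x1 - g x0 = (x1 - x0) * l"
    apply (rule MVT[OF x01(1)])
    using x01 apply (auto intro: continuous_on_subset[OF cg])[1]
    unfolding g_def using dz x01 by (intro derivative_intros | force simp: real_differentiable_def)+
  then obtain l w where w: "x0 < w" "w < x1" "DERIV g w :> l" "g x1 - g x0 = (x1 - x0) * l" by blast
  have "DERIV g w :> z' w - lam" unfolding g_def
    using dz[of w] w x01 by (auto intro!: derivative_eq_intros)
  with w(3) have l: "l = z' w - lam" using DERIV_unique by blast
  have "g w < 0" using below w by simp
  hence "z w < lam*(w-1)" by (simp add: g_def)
  hence "z' w < lam" using cond w x01 by simp
  hence "(x1 - x0) * l < 0" using w l x01 by (simp add: mult_pos_neg)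
  hence "g x1 < g x0" using w(4) by simp
  moreover have "g x0 < 0" using neg by (simp add: g_def)
  moreover have "g x1 \<ge> 0" using x1S by (simp add: S_def x1_def)
  ultimately show False by simp
qed

theorem proposition7p1:
  fixes f h q z :: "real \<Rightarrow> real" and c cstar dq :: real
  assumes f_deriv: "\<forall>x\<in>{0..1}. (f has_real_derivative h x) (at x within {0..1})"
    and h_cont: "continuous_on {0..1} h"
    and f0: "f 0 = 0"
    and q: "cond_q q"
    and q_left_deriv: "(q has_real_derivative dq) (at_left 1)"
    and dq: "dq \<le> 0"
    and cstar: "\<forall>c'. (\<exists>z'. sol_P h q c' z' \<and> z' 1 = 0) \<longleftrightarrow> c' \<ge> cstar"
    and c: "c \<ge> cstar"
    and z: "sol_P h q c z"
  shows "\<exists>L. ((\<lambda>x. (z x - z 1) / (x - 1)) \<longlongrightarrow> L) (at_left 1)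
           \<and> (z 1 < 0 \<longrightarrow> L = h 1 - c)
           \<and> (z 1 = 0 \<longrightarrow>
                (dq < 0 \<longrightarrow> L = (h 1 - c + sqrt ((h 1 - c)\<^sup>2 - 4 * dq)) / 2)
              \<and> (dq = 0 \<longrightarrow> L = max 0 (h 1 - c)))"
proof -
  from z have cz: "continuous_on {0..1} z"
    and dz: "\<And>x. x\<in>{0<..<1} \<Longrightarrow> (z has_real_derivative (h x - c - q x / z x)) (at x)"
    and zneg: "\<And>x. x\<in>{0<..<1} \<Longrightarrow> z x < 0"
    unfolding sol_P_def by auto
  from q have cq: "continuous_on {0..1} q" and qpos: "\<And>x. x\<in>{0<..<1} \<Longrightarrow> q x > 0"
    and q1: "q 1 = 0" unfolding cond_q_def by auto
  have hl: "(h \<longlongrightarrow> h 1) (at_left 1)" using continuous_on_Icc_at_leftD[OF h_cont] by simp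
  have zl: "(z \<longlongrightarrow> z 1) (at_left 1)" using continuous_on_Icc_at_leftD[OF cz] by simp
  have ql: "(q \<longlongrightarrow> 0) (at_left 1)" using continuous_on_Icc_at_leftD[OF cq] q1 by simp
  have ev01: "eventually (\<lambda>x. x \<in> {0<..<1}) (at_left (1::real))"
    by (rule eventually_at_left_real) simp
  have rl0: "((\<lambda>y. (q y - q 1) / (y - 1)) \<longlongrightarrow> dq) (at_left 1)"
    using q_left_deriv by (simp add: has_field_derivative_iff)
  have rl: "((\<lambda>y. q y / (1 - y)) \<longlongrightarrow> - dq) (at_left 1)"
  proof -
    have "((\<lambda>y. - ((q y - q 1) / (y - 1))) \<longlongrightarrow> - dq) (at_left 1)"
      by (intro tendsto_minus rl0)
    moreover have "\<And>y. - ((q y - q 1) / (y - 1)) = q y / (1 - y)"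
      using q1 by (simp add: minus_divide_right)
    ultimately show ?thesis by simp
  qed
  have z1le: "z 1 \<le> 0"
  proof (rule tendsto_upperbound[OF zl])
    show "eventually (\<lambda>x. z x \<le> 0) (at_left 1)"
      by (rule eventually_mono[OF ev01]) (simp add: zneg less_imp_le)
  qed simp
  show ?thesis
  proof (cases "z 1 < 0")
    case True
    have lim: "((\<lambda>x. (z x - z 1) / (x - 1)) \<longlongrightarrow> h 1 - c) (at_left 1)"
    proof (rule lhopital_left[where f' = "\<lambda>x. h x - c - q x / z x" and g' = "\<lambda>x. 1"])
      show "((\<lambda>x. z x - z 1) \<longlongrightarrow> 0) (at_left 1)" using tendsto_diff[OF zl tendsto_const[of "z 1"]] by simp
      show "((\<lambda>x. x - 1) \<longlongrightarrow> 0) (at_left (1::real))"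
        using tendsto_diff[OF tendsto_ident_at[of "1::real" "{..<1}"] tendsto_const[of "1::real"]] by simp
      show "\<forall>\<^sub>F x in at_left 1. x - 1 \<noteq> (0::real)" using ev01 by (auto elim: eventually_mono)
      show "\<forall>\<^sub>F x in at_left 1. (1::real) \<noteq> 0" by simp
      show "\<forall>\<^sub>F x in at_left 1. ((\<lambda>x. z x - z 1) has_real_derivative h x - c - q x / z x) (at x)"
        using ev01 by (auto elim!: eventually_mono intro!: derivative_eq_intros dz)
      show "\<forall>\<^sub>F x in at_left 1. ((\<lambda>x. x - 1) has_real_derivative 1) (at x)"
        by (rule always_eventually) (auto intro!: derivative_eq_intros)
      have "((\<lambda>x. h x - c - q x / z x) \<longlongrightarrow> h 1 - c - 0 / z 1) (at_left 1)"
        using True by (intro tendsto_intros hl ql zl) simp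
      thus "((\<lambda>x. (h x - c - q x / z x) / 1) \<longlongrightarrow> h 1 - c) (at_left 1)" by simp
    qed
    show ?thesis using True lim by auto
  next
    case False
    with z1le have z10: "z 1 = 0" by simp
    define a where "a = h 1 - c"
    define p where "p = - dq"
    define s where "s = sqrt (a\<^sup>2 + 4 * p)"
    define L where "L = (a + s) / 2"
    have p0: "p \<ge> 0" using dq by (simp add: p_def)
    have s0: "s \<ge> 0" using p0 by (simp add: s_def)
    have ss: "s\<^sup>2 = a\<^sup>2 + 4 * p" using p0 by (simp add: s_def)
    have sa: "\<bar>a\<bar> \<le> s"
    proof -
      have "sqrt (a\<^sup>2) \<le> sqrt (a\<^sup>2 + 4 * p)" using p0 by (intro real_sqrt_le_mono) simp
      thus ?thesis by (simp add: s_def)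
    qed
    have L0: "L \<ge> 0" using sa by (simp add: L_def)
    have quad: "lam\<^sup>2 - a * lam - p = (lam - L) * (lam - (a - s) / 2)" for lam
      using ss by (simp add: L_def field_simps power2_eq_square)
    have Rl: "((\<lambda>x. h x - c + q x / (1 - x) / lam) \<longlongrightarrow> a + p / lam) (at_left 1)" if "0 < lam" for lam
      unfolding a_def p_def using that by (intro tendsto_intros hl rl) simp
    have lim: "((\<lambda>x. (z x - z 1) / (x - 1)) \<longlongrightarrow> L) (at_left 1)"
    proof (rule order_tendstoI)
      fix e assume eL: "L < e"
      define lam where "lam = (L + e) / 2"
      have lamL: "L < lam" "0 < lam" using eL L0 by (auto simp: lam_def)
      have "lam\<^sup>2 - a * lam - p > 0" unfolding quad using lamL s0 sa
        by (intro mult_pos_pos) (auto simp: L_def)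
      hence "a + p / lam < lam" using lamL
        by (simp add: field_simps power2_eq_square)
      from order_tendstoD(2)[OF Rl[OF lamL(2)] this]
      have "eventually (\<lambda>x. x \<in> {0<..<1} \<and> h x - c + q x / (1 - x) / lam < lam) (at_left 1)"
        by (rule eventually_conj[OF ev01])
      then obtain b where b: "b < 1" "\<And>y. b < y \<Longrightarrow> y < 1 \<Longrightarrow> y \<in> {0<..<1} \<and> h y - c + q y / (1 - y) / lam < lam"
        unfolding eventually_at_left_field by auto
      show "eventually (\<lambda>x. (z x - z 1) / (x - 1) < e) (at_left 1)"
      proof (rule eventually_at_leftI[of b])
        fix x0 assume x0: "x0 \<in> {b<..<1}"
        have "lam * (x0 - 1) \<le> z x0"
        proof (rule trap[where z' = "\<lambda>x. h x - c - q x / z x"])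
          show "x0 < 1" using x0 by simp
          show "continuous_on {x0..1} z" using b(2)[of x0] x0
            by (auto intro: continuous_on_subset[OF cz])
          show "z 1 = 0" by fact
          fix x assume x: "x0 < x" "x < 1"
          have bx: "x \<in> {0<..<1}" "h x - c + q x / (1 - x) / lam < lam" using b(2)[of x] x x0 by auto
          show "(z has_real_derivative h x - c - q x / z x) (at x)" using dz bx by simp
          assume zx: "z x < lam * (x - 1)"
          have qx: "q x > 0" using qpos bx by simp
          have zn: "z x < 0" using zneg bx by simp
          have l1: "lam * (1 - x) < - z x" using zx by (simp add: algebra_simps)
          have l2: "0 < - z x * (lam * (1 - x))" using zn bx lamL by (intro mult_pos_pos) auto
          have "q x / (- z x) < q x / (lam * (1 - x))"
            by (rule divide_strict_left_mono[OF l1 qx l2])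
          also have "\<dots> = q x / (1 - x) / lam" by simp
          finally have "h x - c - q x / z x < h x - c + q x / (1 - x) / lam"
            by (simp add: minus_divide_right[symmetric])
          thus "h x - c - q x / z x < lam" using bx by simp
        qed
        hence "z x0 / (x0 - 1) \<le> lam" using x0 by (simp add: neg_divide_le_eq)
        moreover have "lam < e" using eL by (simp add: lam_def)
        ultimately show "(z x0 - z 1) / (x0 - 1) < e" using z10 by simp
      qed (use b in simp)
    next
      fix e assume eL: "e < L"
      show "eventually (\<lambda>x. e < (z x - z 1) / (x - 1)) (at_left 1)"
      proof (cases "e \<le> 0")
        case True
        show ?thesis using ev01
        proof (rule eventually_mono)
          fix x assume "x \<in> {0<..<(1::real)}"
          hence "z x < 0" "x - 1 < 0" using zneg by auto
          hence "0 < z x / (x - 1)" by (simp add: divide_neg_neg)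
          thus "e < (z x - z 1) / (x - 1)" using True z10 by simp
        qed
      next
        case False
        define lam where "lam = (L + e) / 2"
        have lamL: "lam < L" "0 < lam" "e < lam" using eL False by (auto simp: lam_def)
        have "lam\<^sup>2 - a * lam - p < 0" unfolding quad using lamL s0 sa
          by (intro mult_neg_pos) (auto simp: L_def)
        hence "lam < a + p / lam" using lamL
          by (simp add: field_simps power2_eq_square)
        from order_tendstoD(1)[OF Rl[OF lamL(2)] this]
        have "eventually (\<lambda>x. x \<in> {0<..<1} \<and> lam < h x - c + q x / (1 - x) / lam) (at_left 1)"
          by (rule eventually_conj[OF ev01])
        then obtain b where b: "b < 1" "\<And>y. b < y \<Longrightarrow> y < 1 \<Longrightarrow> y \<in> {0<..<1} \<and> lam < h y - c + q y / (1 - y) / lam"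
          unfolding eventually_at_left_field by auto
        show ?thesis
        proof (rule eventually_at_leftI[of b])
          fix x0 assume x0: "x0 \<in> {b<..<1}"
          have "(- lam) * (x0 - 1) \<le> (\<lambda>x. - z x) x0"
          proof (rule trap[where z' = "\<lambda>x. - (h x - c - q x / z x)"])
            show "x0 < 1" using x0 by simp
            show "continuous_on {x0..1} (\<lambda>x. - z x)" using b(2)[of x0] x0
              by (auto intro!: continuous_intros intro: continuous_on_subset[OF cz])
            show "- z 1 = 0" using z10 by simp
            fix x assume x: "x0 < x" "x < 1"
            have bx: "x \<in> {0<..<1}" "lam < h x - c + q x / (1 - x) / lam" using b(2)[of x] x x0 by auto
            show "((\<lambda>x. - z x) has_real_derivative - (h x - c - q x / z x)) (at x)"
              using dz bx by (auto intro!: derivative_eq_intros)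
            assume zx: "- z x < - lam * (x - 1)"
            have qx: "q x > 0" using qpos bx by simp
            have zn: "z x < 0" using zneg bx by simp
            have l1: "- z x < lam * (1 - x)" using zx by (simp add: algebra_simps)
            have l2: "0 < (lam * (1 - x)) * (- z x)" using zn bx lamL by (intro mult_pos_pos) auto
            have "q x / (lam * (1 - x)) < q x / (- z x)"
              by (rule divide_strict_left_mono[OF l1 qx l2])
            moreover have "q x / (lam * (1 - x)) = q x / (1 - x) / lam" by simp
            ultimately have "h x - c + q x / (1 - x) / lam < h x - c - q x / z x"
              by (simp add: minus_divide_right[symmetric])
            thus "- (h x - c - q x / z x) < - lam" using bx by simp
          qed
          hence "lam \<le> z x0 / (x0 - 1)" using x0 by (simp add: neg_le_divide_eq)
          thus "e < (z x0 - z 1) / (x0 - 1)" using z10 lamL by simp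
        qed (use b in simp)
      qed
    qed
    have "dq < 0 \<longrightarrow> L = (h 1 - c + sqrt ((h 1 - c)\<^sup>2 - 4 * dq)) / 2"
      by (simp add: L_def s_def a_def p_def)
    moreover have "dq = 0 \<longrightarrow> L = max 0 (h 1 - c)"
      by (auto simp: L_def s_def a_def p_def max_def abs_if)
    ultimately show ?thesis using lim z10 by auto
  qed
qed

end
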